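(* Let $X,Y$ be $d\times d$ complex matrices with $\|X\|_\infty+\|Y\|_\infty<\log2$. Let $M:=\max\{\|X\|_\infty,\|Y\|_\infty\}$ and $\varepsilon:=\|X+Y\|_F$. Then for every $r\ge1$, $$\|\mathrm{BCH}_r(X,Y)\|_F\le C_rM^{r-1}\varepsilon,\qquad C_r:=\frac{2^{2r-1}r^r}{r!}\le(4e)^r.$$
   Context: $\|A\|_F:=\sqrt{\operatorname{Tr}(A^\dagger A)/d}$ is the normalized Frobenius norm and $\|\cdot\|_\infty$ the operator norm. $\mathrm{BCH}_r(X,Y)$ is the degree-$r$ homogeneous term of the Baker–Campbell–Hausdorff series $\log(e^Xe^Y)=\sum_{r\ge1}\mathrm{BCH}_r(X,Y)$, given by Dynkin's formula $$\mathrm{BCH}_r(X,Y)=\sum_{n=1}^r\frac{(-1)^{n-1}}{n}\sum_{\substack{r_i,s_i\ge0,\ r_i+s_i>0\\ \sum_{i=1}^n(r_i+s_i)=r}}\frac{[X^{r_1}Y^{s_1}\cdots X^{r_n}Y^{s_n}]}{r\prod_{i=1}^n r_i!\,s_i!},$$ where $[Z_1Z_2\cdots Z_r]:=[Z_1,[Z_2,\dots,[Z_{r-1},Z_r]\dots]]$ is the left-normed commutator of the word consisting of $r_1$ copies of $X$, then $s_1$ copies of $Y$, etc. (with $[Z_1]:=Z_1$). *)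

theory Defs
  imports "HOL-Analysis.Analysis"
begin

text \<open>d x d complex matrices are modelled as complex^'n^'n with d = CARD('n).\<close>

definition op_norm :: "complex^'n^'n \<Rightarrow> real" where
  "op_norm A = onorm (\<lambda>v::complex^'n. A *v v)"

text \<open>Normalized Frobenius norm: sqrt(Tr(A^* A)/d) = sqrt(sum |A_ij|^2 / d).\<close>
definition frob_norm :: "complex^'n^'n \<Rightarrow> real" where
  "frob_norm A = sqrt ((\<Sum>i\<in>UNIV. \<Sum>j\<in>UNIV. (cmod (A $ i $ j))\<^sup>2) / real CARD('n))"

definition mcomm :: "complex^'n^'n \<Rightarrow> complex^'n^'n \<Rightarrow> complex^'n^'n" where
  "mcomm A B = A ** B - B ** A"

fun nested_comm :: "(complex^'n^'n) list \<Rightarrow> complex^'n^'n" where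
  "nested_comm [] = 0"
| "nested_comm [Z] = Z"
| "nested_comm (Z # Zs) = mcomm Z (nested_comm Zs)"

definition bch_word :: "complex^'n^'n \<Rightarrow> complex^'n^'n \<Rightarrow> (nat \<times> nat) list \<Rightarrow> (complex^'n^'n) list" where
  "bch_word X Y ps = concat (map (\<lambda>(a, b). replicate a X @ replicate b Y) ps)"

definition dynkin_idx :: "nat \<Rightarrow> nat \<Rightarrow> (nat \<times> nat) list set" where
  "dynkin_idx r n = {ps. length ps = n \<and> (\<forall>(a, b)\<in>set ps. a + b > 0)
      \<and> sum_list (map (\<lambda>(a, b). a + b) ps) = r}"

text \<open>Degree-r term of the BCH series via Dynkin's formula.\<close>
definition BCH :: "nat \<Rightarrow> complex^'n^'n \<Rightarrow> complex^'n^'n \<Rightarrow> complex^'n^'n" where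
  "BCH r X Y = (\<Sum>n\<in>{1..r}. \<Sum>ps\<in>dynkin_idx r n.
      ((-1) ^ (n - 1) / real n
        / (real r * (\<Prod>(a, b)\<leftarrow>ps. fact a * fact b))) *\<^sub>R nested_comm (bch_word X Y ps))"

end

theory Submission
  imports Defs
begin



lemma op_norm_mv: "norm (A *v v) \<le> op_norm A * norm v"
  unfolding op_norm_def by (rule onorm) simp

lemma op_norm_nonneg: "0 \<le> op_norm A"
  unfolding op_norm_def by (rule onorm_pos_le) simp

lemma norm_vec_sq: "(norm (x::'a::real_normed_vector^'n))^2 = (\<Sum>i\<in>UNIV. (norm (x$i))^2)"
  unfolding norm_vec_def L2_set_def by (simp add: sum_nonneg)

lemma frob_eq: "frob_norm (A::complex^'n^'n) = norm A / sqrt (real CARD('n))"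
proof -
  have "(norm A)^2 = (\<Sum>i\<in>UNIV. \<Sum>j\<in>UNIV. (cmod (A $ i $ j))\<^sup>2)"
    by (simp add: norm_vec_sq)
  then have "norm A = sqrt (\<Sum>i\<in>UNIV. \<Sum>j\<in>UNIV. (cmod (A $ i $ j))\<^sup>2)"
    by (metis norm_ge_zero real_sqrt_unique)
  then show ?thesis unfolding frob_norm_def by (simp add: real_sqrt_divide)
qed

lemma norm_transpose: "norm (transpose (A::complex^'n^'n)) = norm A"
proof -
  have "(norm (transpose A))^2 = (norm A)^2"
    by (simp add: norm_vec_sq transpose_def) (rule sum.swap)
  then show ?thesis by (simp add: power2_eq_iff_nonneg)
qed

lemma row_mult: "((A::complex^'n^'n) ** (B::complex^'n^'n)) $ i = transpose B *v (A $ i)"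
  by (simp add: matrix_matrix_mult_def matrix_vector_mult_def transpose_def vec_eq_iff)
     (rule allI, rule sum.cong[OF refl], rule mult.commute)

lemma norm_mult_right: "norm ((A::complex^'n^'n) ** (B::complex^'n^'n)) \<le> op_norm (transpose B) * norm A"
proof -
  have "(norm (A ** B))^2 = (\<Sum>i\<in>UNIV. (norm (transpose B *v (A $ i)))^2)"
    by (simp add: norm_vec_sq row_mult)
  also have "\<dots> \<le> (\<Sum>i\<in>UNIV. (op_norm (transpose B) * norm (A $ i))^2)"
    by (intro sum_mono power_mono op_norm_mv) simp
  also have "\<dots> = (op_norm (transpose B) * norm A)^2"
    by (simp add: power_mult_distrib norm_vec_sq sum_distrib_left)
  finally show ?thesis
    by (rule power2_le_imp_le) (simp add: op_norm_nonneg)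
qed

lemma norm_mult_left: "norm ((A::complex^'n^'n) ** (B::complex^'n^'n)) \<le> op_norm A * norm B"
proof -
  have "norm (A ** B) = norm (transpose (A ** B))"
    by (simp only: norm_transpose)
  also have "\<dots> = norm (transpose B ** transpose A)"
    by (simp only: matrix_transpose_mul)
  also have "\<dots> \<le> op_norm A * norm B"
    using norm_mult_right[of "transpose B" "transpose A"] by (simp only: transpose_transpose norm_transpose)
  finally show ?thesis .
qed

lemma op_norm_transpose: "op_norm (transpose (A::complex^'n^'n)) \<le> op_norm A"
  unfolding op_norm_def[of "transpose A"]
proof (rule onorm_le)
  fix v :: "complex^'n"
  define w where "w = transpose A *v v"
  define u where "u = (\<chi> j. cnj (w $ j))"
  have nu: "norm u = norm w" unfolding u_def by (simp add: norm_vec_def)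
  have cn: "\<And>z::complex. cnj z * z = complex_of_real ((norm z)^2)"
    using complex_norm_square by (metis mult.commute)
  have "complex_of_real ((norm w)^2) = (\<Sum>j\<in>UNIV. cnj (w$j) * w$j)"
    unfolding cn norm_vec_sq of_real_sum ..
  also have "\<dots> = (\<Sum>j\<in>UNIV. \<Sum>i\<in>UNIV. cnj (w$j) * (A$i$j * v$i))"
    by (simp add: w_def matrix_vector_mult_def transpose_def sum_distrib_left)
  also have "\<dots> = (\<Sum>i\<in>UNIV. v$i * (A *v u)$i)"
    by (subst sum.swap) (simp add: u_def matrix_vector_mult_def sum_distrib_left mult_ac)
  finally have eq0: "complex_of_real ((norm w)^2) = (\<Sum>i\<in>UNIV. v$i * (A *v u)$i)" .
  have "(norm w)^2 = cmod (complex_of_real ((norm w)^2))" by (simp only: norm_of_real) simp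
  also have "\<dots> = cmod (\<Sum>i\<in>UNIV. v$i * (A *v u)$i)" by (simp only: eq0)
  also have "\<dots> \<le> (\<Sum>i\<in>UNIV. \<bar>norm (v$i)\<bar> * \<bar>norm ((A *v u)$i)\<bar>)"
    by (rule order_trans[OF norm_sum]) (simp add: norm_mult)
  also have "\<dots> \<le> norm v * norm (A *v u)"
    unfolding norm_vec_def by (rule L2_set_mult_ineq)
  also have "\<dots> \<le> norm v * (op_norm A * norm w)"
    using op_norm_mv[of A u] nu by (simp add: mult_left_mono)
  finally have "norm w * norm w \<le> (op_norm A * norm v) * norm w"
    by (simp add: power2_eq_square mult_ac)
  note key = this
  show "norm (transpose A *v v) \<le> op_norm A * norm v"
  proof (cases "norm w = 0")
    case True
    then have "norm (transpose A *v v) = 0" by (simp only: w_def)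
    then show ?thesis using op_norm_nonneg[of A] by (metis mult_nonneg_nonneg norm_ge_zero)
  next
    case False
    then have "0 < norm w" by simp
    then have "norm w \<le> op_norm A * norm v" using mult_right_le_imp_le[OF key] by simp
    then show ?thesis by (simp only: w_def)
  qed
qed

lemma norm_mult_right': "norm ((A::complex^'n^'n) ** B) \<le> norm A * op_norm B"
proof -
  have "op_norm (transpose B) * norm A \<le> op_norm B * norm A"
    by (rule mult_right_mono[OF op_norm_transpose norm_ge_zero])
  then show ?thesis using norm_mult_right[of A B] by (simp add: mult.commute)
qed

lemma op_norm_mult: "op_norm ((A::complex^'n^'n) ** B) \<le> op_norm A * op_norm B"
proof -
  have "(\<lambda>v. (A ** B) *v v) = (\<lambda>v. A *v v) \<circ> (\<lambda>v. B *v v)"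
    by (simp add: o_def matrix_vector_mul_assoc)
  then show ?thesis unfolding op_norm_def
    by (simp add: onorm_compose)
qed

lemma op_norm_diff: "op_norm ((A::complex^'n^'n) - B) \<le> op_norm A + op_norm B"
proof -
  have "(\<lambda>v. (A - B) *v v) = (\<lambda>v. (A *v v) + (- (B *v v)))"
    by (simp add: matrix_vector_mult_diff_rdistrib)
  moreover have "onorm (\<lambda>v. - (B *v v)) = op_norm B"
    unfolding op_norm_def by (rule onorm_neg)
  moreover have "onorm (\<lambda>v. (A *v v) + (- (B *v v))) \<le> onorm (\<lambda>v. A *v v) + onorm (\<lambda>v. - (B *v v))"
    by (rule onorm_triangle) (auto intro: bounded_linear_minus)
  ultimately show ?thesis unfolding op_norm_def by simp
qed

lemma op_norm_neg: "op_norm (- (A::complex^'n^'n)) = op_norm A"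
proof -
  have "(\<lambda>v. (- A) *v v) = (\<lambda>v. - (A *v v))"
    by (rule ext) (simp add: matrix_vector_mult_def vec_eq_iff sum_negf)
  then show ?thesis unfolding op_norm_def by (simp add: onorm_neg)
qed



lemma mmult_diff_left: "((A::complex^'n^'n) - B) ** C = A ** C - B ** C"
  by (simp add: matrix_matrix_mult_def vec_eq_iff algebra_simps sum_subtractf)

lemma mmult_diff_right: "(A::complex^'n^'n) ** (B - C) = A ** B - A ** C"
  by (simp add: matrix_matrix_mult_def vec_eq_iff algebra_simps sum_subtractf)

lemma mcomm_tele: "mcomm Z N - mcomm W N' = mcomm (Z - W) N + mcomm W (N - N')"
  unfolding mcomm_def mmult_diff_left mmult_diff_right by (simp add: algebra_simps)

lemma norm_mcomm_l: "norm (mcomm A B) \<le> 2 * op_norm A * norm B"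
proof -
  have "norm (mcomm A B) \<le> norm (A ** B) + norm (B ** A)"
    unfolding mcomm_def by (rule norm_triangle_ineq4)
  also have "\<dots> \<le> op_norm A * norm B + norm B * op_norm A"
    by (intro add_mono norm_mult_left norm_mult_right')
  finally show ?thesis by simp
qed

lemma norm_mcomm_r: "norm (mcomm A B) \<le> 2 * norm A * op_norm B"
proof -
  have "norm (mcomm A B) \<le> norm (A ** B) + norm (B ** A)"
    unfolding mcomm_def by (rule norm_triangle_ineq4)
  also have "\<dots> \<le> norm A * op_norm B + op_norm B * norm A"
    by (intro add_mono norm_mult_left norm_mult_right')
  finally show ?thesis by (simp add: mult_ac)
qed

lemma op_mcomm: "op_norm (mcomm A B) \<le> 2 * op_norm A * op_norm B"
proof -
  have "op_norm (mcomm A B) \<le> op_norm (A ** B) + op_norm (B ** A)"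
    unfolding mcomm_def by (rule op_norm_diff)
  also have "\<dots> \<le> op_norm A * op_norm B + op_norm B * op_norm A"
    by (intro add_mono op_norm_mult)
  finally show ?thesis by simp
qed

lemma nested_cons: "Zs \<noteq> [] \<Longrightarrow> nested_comm (Z # Zs) = mcomm Z (nested_comm Zs)"
  by (cases Zs) auto

lemma op_nested:
  assumes "\<forall>Z\<in>set Zs. op_norm Z \<le> M" "Zs \<noteq> []"
  shows "op_norm (nested_comm Zs) \<le> 2 ^ (length Zs - 1) * M ^ length Zs"
  using assms
proof (induction Zs)
  case Nil then show ?case by simp
next
  case (Cons Z Zs)
  show ?case
  proof (cases "Zs = []")
    case True then show ?thesis using Cons by simp
  next
    case False
    then obtain j where j: "length Zs = Suc j" by (cases Zs) auto
    have M0: "0 \<le> M" using Cons.prems op_norm_nonneg by (meson list.set_intros(1) order_trans)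
    have IH: "op_norm (nested_comm Zs) \<le> 2 ^ j * M ^ Suc j"
      using Cons False j by simp
    have "op_norm (nested_comm (Z # Zs)) \<le> 2 * op_norm Z * op_norm (nested_comm Zs)"
      using nested_cons[OF False] op_mcomm by simp
    also have "\<dots> \<le> 2 * M * (2 ^ j * M ^ Suc j)"
      using Cons.prems IH op_norm_nonneg M0
      by (intro mult_mono) auto
    also have "\<dots> = 2 ^ (length (Z # Zs) - 1) * M ^ length (Z # Zs)"
      using j by simp
    finally show ?thesis .
  qed
qed

lemma nested_tele:
  assumes "list_all2 (\<lambda>Z W. op_norm Z \<le> M \<and> op_norm W \<le> M \<and> norm (Z - W) \<le> e) Zs Ws" "Zs \<noteq> []"
  shows "norm (nested_comm Zs - nested_comm Ws)
           \<le> real (length Zs) * 2 ^ (length Zs - 1) * M ^ (length Zs - 1) * e"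
  using assms
proof (induction Zs arbitrary: Ws)
  case Nil then show ?case by simp
next
  case (Cons Z Zs)
  obtain W Ws' where Ws: "Ws = W # Ws'" and hZW: "op_norm Z \<le> M" "op_norm W \<le> M" "norm (Z - W) \<le> e"
    and rest: "list_all2 (\<lambda>Z W. op_norm Z \<le> M \<and> op_norm W \<le> M \<and> norm (Z - W) \<le> e) Zs Ws'"
    using Cons.prems(1) by (cases Ws) auto
  have M0: "0 \<le> M" using hZW(1) op_norm_nonneg order_trans by blast
  have e0: "0 \<le> e" using hZW(3) norm_ge_zero order_trans by blast
  show ?case
  proof (cases "Zs = []")
    case True
    then have "Ws' = []" using rest by simp
    then show ?thesis using True Ws hZW by simp
  next
    case False
    then have F': "Ws' \<noteq> []" using rest list_all2_lengthD by fastforce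
    obtain j where j: "length Zs = Suc j" using False by (cases Zs) auto
    have IH: "norm (nested_comm Zs - nested_comm Ws') \<le> real (Suc j) * 2 ^ j * M ^ j * e"
      using Cons.IH[OF rest False] j by simp
    have allZ: "\<forall>Z\<in>set Zs. op_norm Z \<le> M"
      using rest by (metis (no_types, lifting) in_set_conv_nth list_all2_conv_all_nth)
    have opN: "op_norm (nested_comm Zs) \<le> 2 ^ j * M ^ Suc j"
      using op_nested[OF allZ False] j by simp
    have "norm (nested_comm (Z # Zs) - nested_comm Ws)
          = norm (mcomm (Z - W) (nested_comm Zs) + mcomm W (nested_comm Zs - nested_comm Ws'))"
      unfolding Ws nested_cons[OF False] nested_cons[OF F'] mcomm_tele ..
    also have "\<dots> \<le> norm (mcomm (Z - W) (nested_comm Zs)) + norm (mcomm W (nested_comm Zs - nested_comm Ws'))"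
      by (rule norm_triangle_ineq)
    also have "\<dots> \<le> 2 * norm (Z - W) * op_norm (nested_comm Zs) + 2 * op_norm W * norm (nested_comm Zs - nested_comm Ws')"
      by (intro add_mono norm_mcomm_l norm_mcomm_r)
    also have "\<dots> \<le> 2 * e * (2 ^ j * M ^ Suc j) + 2 * M * (real (Suc j) * 2 ^ j * M ^ j * e)"
      using hZW IH opN M0 e0 op_norm_nonneg
      by (intro add_mono mult_mono) auto
    also have "\<dots> = (real (Suc j) + 1) * (2 * 2 ^ j) * (M * M ^ j) * e"
      by (simp add: algebra_simps)
    also have "\<dots> = real (length (Z # Zs)) * 2 ^ (length (Z # Zs) - 1) * M ^ (length (Z # Zs) - 1) * e"
      using j by simp
    finally show ?thesis using Ws by simp
  qed
qed



lemma binom_exp: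
  fixes x y :: real
  shows "(\<Sum>k\<le>m. x^k / fact k * (y^(m-k) / fact (m-k))) = (x+y)^m / fact m"
proof -
  have "(x+y)^m / fact m = (\<Sum>k\<le>m. of_nat (m choose k) * x^k * y^(m-k)) / fact m"
    by (simp add: binomial_ring)
  also have "\<dots> = (\<Sum>k\<le>m. x^k / fact k * (y^(m-k) / fact (m-k)))"
    unfolding sum_divide_distrib
    by (intro sum.cong refl) (simp add: binomial_fact field_simps)
  finally show ?thesis by simp
qed

lemma dynkin_fin: "finite (dynkin_idx r n)"
proof (rule finite_subset)
  show "dynkin_idx r n \<subseteq> {ps. set ps \<subseteq> {..r} \<times> {..r} \<and> length ps = n}"
  proof
    fix ps assume ps: "ps \<in> dynkin_idx r n"
    have "set ps \<subseteq> {..r} \<times> {..r}"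
    proof
      fix p assume p: "p \<in> set ps"
      obtain a b where ab: "p = (a, b)" by (cases p)
      have "a + b \<in> set (map (\<lambda>(a, b). a + b) ps)" using p ab by force
      then have "a + b \<le> sum_list (map (\<lambda>(a, b). a + b) ps)" by (rule member_le_sum_list) auto
      then show "p \<in> {..r} \<times> {..r}" using ps ab by (simp add: dynkin_idx_def)
    qed
    then show "ps \<in> {ps. set ps \<subseteq> {..r} \<times> {..r} \<and> length ps = n}"
      using ps by (simp add: dynkin_idx_def)
  qed
  show "finite {ps. set ps \<subseteq> {..r} \<times> {..r} \<and> length ps = n}"
    by (rule finite_lists_length_eq) simp
qed

lemma dynkin_0: "dynkin_idx r 0 = (if r = 0 then {[]} else {})"
  by (auto simp: dynkin_idx_def)

lemma dynkin_Suc_sub: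
  "dynkin_idx r (Suc n) \<subseteq> (\<lambda>(a, b, ps). (a, b) # ps) ` (SIGMA a:{..r}. SIGMA b:{..r-a}. dynkin_idx (r-a-b) n)"
proof
  fix ps assume ps: "ps \<in> dynkin_idx r (Suc n)"
  then obtain a b ps' where eq: "ps = (a, b) # ps'"
    by (cases ps) (auto simp: dynkin_idx_def)
  have h: "length ps' = n" "\<forall>(a, b)\<in>set ps'. a + b > 0" "a + b + sum_list (map (\<lambda>(a, b). a + b) ps') = r"
    using ps eq by (auto simp: dynkin_idx_def)
  then have "ps' \<in> dynkin_idx (r-a-b) n" by (auto simp: dynkin_idx_def)
  moreover have "a \<le> r" "b \<le> r - a" using h(3) by auto
  ultimately show "ps \<in> (\<lambda>(a, b, ps). (a, b) # ps) ` (SIGMA a:{..r}. SIGMA b:{..r-a}. dynkin_idx (r-a-b) n)"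
    using eq by (intro image_eqI[where x="(a, b, ps')"]) auto
qed

lemma T_bound:
  "(\<Sum>ps\<in>dynkin_idx r n. 1 / (\<Prod>(a, b)\<leftarrow>ps. fact a * fact b :: real)) \<le> (2 * real n)^r / fact r"
proof (induction n arbitrary: r)
  case 0 then show ?case by (simp add: dynkin_0)
next
  case (Suc n)
  define f :: "(nat \<times> nat) list \<Rightarrow> real" where "f ps = 1 / (\<Prod>(a, b)\<leftarrow>ps. fact a * fact b)" for ps
  define S where "S = (SIGMA a:{..r}. SIGMA b:{..r-a}. dynkin_idx (r-a-b) n)"
  have fS: "finite S" unfolding S_def by (intro finite_SigmaI finite_atMost dynkin_fin)
  have f0: "0 \<le> f ps" for ps unfolding f_def
    by (induction ps) (auto intro!: prod_list_nonneg)
  have inj: "inj_on (\<lambda>(a, b, ps). (a, b) # ps) S" by (auto simp: inj_on_def)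
  have "(\<Sum>ps\<in>dynkin_idx r (Suc n). f ps) \<le> (\<Sum>ps\<in>(\<lambda>(a, b, ps). (a, b) # ps) ` S. f ps)"
    using dynkin_Suc_sub[of r n] fS f0 unfolding S_def[symmetric]
    by (intro sum_mono2) auto
  also have "\<dots> = (\<Sum>(a, b, ps)\<in>S. f ((a, b) # ps))"
    by (subst sum.reindex[OF inj]) (simp add: case_prod_unfold)
  also have "\<dots> = (\<Sum>a\<le>r. \<Sum>b\<le>r-a. \<Sum>ps\<in>dynkin_idx (r-a-b) n. f ((a, b) # ps))"
    unfolding S_def by (simp add: sum.Sigma[symmetric] dynkin_fin)
  also have "\<dots> = (\<Sum>a\<le>r. \<Sum>b\<le>r-a. 1 / (fact a * fact b) * (\<Sum>ps\<in>dynkin_idx (r-a-b) n. f ps))"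
    by (simp add: f_def sum_distrib_left)
  also have "\<dots> \<le> (\<Sum>a\<le>r. \<Sum>b\<le>r-a. 1 / (fact a * fact b) * ((2 * real n)^(r-a-b) / fact (r-a-b)))"
    using Suc.IH unfolding f_def by (intro sum_mono mult_left_mono) auto
  also have "\<dots> = (\<Sum>a\<le>r. 1^a / fact a * (\<Sum>b\<le>r-a. 1^b / fact b * ((2 * real n)^((r-a)-b) / fact ((r-a)-b))))"
    by (simp add: sum_distrib_left mult_ac diff_diff_add)
  also have "\<dots> = (\<Sum>a\<le>r. 1^a / fact a * ((1 + 2 * real n)^(r-a) / fact (r-a)))"
    by (simp only: binom_exp)
  also have "\<dots> = (1 + (1 + 2 * real n))^r / fact r"
    by (rule binom_exp)
  finally show ?case by (simp add: f_def)
qed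

lemma sum_n_bound:
  assumes "r \<ge> 1"
  shows "(\<Sum>n\<in>{1..r}. 1 / real n * ((2 * real n)^r / fact r)) \<le> 2^r * real r ^ r / fact r"
proof -
  have "(\<Sum>n\<in>{1..r}. 1 / real n * ((2 * real n)^r / fact r)) \<le> real (card {1..r}) * (2^r * real r ^ (r-1) / fact r)"
  proof (rule sum_bounded_above)
    fix n assume n: "n \<in> {1..r}"
    obtain k where k: "r = Suc k" using assms by (cases r) auto
    have "1 / real n * ((2 * real n)^r / fact r) = 2^r * real n ^ k / fact r"
      using n k by (simp add: power_mult_distrib field_simps)
    also have "\<dots> \<le> 2^r * real r ^ k / fact r"
      using n by (intro divide_right_mono mult_left_mono power_mono) auto
    finally show "1 / real n * ((2 * real n)^r / fact r) \<le> 2^r * real r ^ (r-1) / fact r"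
      using k by simp
  qed
  also have "\<dots> = 2^r * real r ^ r / fact r"
    using assms by (cases r) (auto simp: field_simps)
  finally show ?thesis .
qed

lemma const_bound: "2 ^ (2 * r - 1) * real r ^ r / fact r \<le> (4 * exp 1) ^ r"
proof -
  have "(\<Sum>n\<le>r. real r ^ n / fact n) \<le> exp (real r)"
    using summable_exp_generic[of "real r"]
    by (auto simp: exp_def divide_inverse ac_simps intro!: sum_le_suminf)
  moreover have "real r ^ r / fact r \<le> (\<Sum>n\<le>r. real r ^ n / fact n)"
    by (rule member_le_sum) auto
  ultimately have e: "real r ^ r / fact r \<le> exp 1 ^ r"
    by (simp add: exp_of_nat_mult[symmetric])
  have "(2::real) ^ (2 * r - 1) \<le> 4 ^ r"
  proof -
    have "(2::real) ^ (2 * r - 1) \<le> 2 ^ (2 * r)" by (rule power_increasing) auto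
    also have "\<dots> = 4 ^ r" by (simp add: power_mult)
    finally show ?thesis .
  qed
  then have "2 ^ (2 * r - 1) * (real r ^ r / fact r) \<le> 4 ^ r * exp 1 ^ r"
    using e by (intro mult_mono) auto
  then show ?thesis by (simp add: power_mult_distrib)
qed



lemma all2_rep: "Q x y \<Longrightarrow> list_all2 Q (replicate a x) (replicate a y)"
  by (induction a) auto

lemma word_all2:
  "list_all2 (\<lambda>Z W. (Z = X \<and> W = X) \<or> (Z = Y \<and> W = -X)) (bch_word X Y ps) (bch_word X (-X) ps)"
proof (induction ps)
  case Nil then show ?case by (simp add: bch_word_def)
next
  case (Cons p ps)
  obtain a b where p: "p = (a, b)" by (cases p)
  have "bch_word X Y (p # ps) = (replicate a X @ replicate b Y) @ bch_word X Y ps"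
       "bch_word X (-X) (p # ps) = (replicate a X @ replicate b (-X)) @ bch_word X (-X) ps"
    by (simp_all add: bch_word_def p)
  then show ?case using Cons.IH
    by (simp only:) (intro list_all2_appendI all2_rep; simp)
qed

lemma word_len: "length (bch_word X Y ps) = sum_list (map (\<lambda>(a, b). a + b) ps)"
  by (induction ps) (auto simp: bch_word_def)

lemma word_set: "set (bch_word X (-X) ps) \<subseteq> {X, -X}"
  by (auto simp: bch_word_def)

lemma mcomm_pm:
  assumes "Z \<in> {X, -X}" "N \<in> {X, -X, 0}"
  shows "mcomm Z N = (0::complex^'n^'n)"
  using assms by (auto simp: mcomm_def matrix_matrix_mult_def vec_eq_iff sum_negf)

lemma nested_pm: "set Ws \<subseteq> {X, -X} \<Longrightarrow> nested_comm Ws \<in> {X, -X, (0::complex^'n^'n)}"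
proof (induction Ws rule: nested_comm.induct)
  case 1 then show ?case by simp
next
  case (2 Z) then show ?case by auto
next
  case (3 Z v va)
  then have "nested_comm (v # va) \<in> {X, -X, 0}" by simp
  moreover have "Z \<in> {X, -X}" using 3 by simp
  ultimately have "mcomm Z (nested_comm (v # va)) = 0" by (rule mcomm_pm[rotated])
  then show ?case by simp
qed

lemma nested_zero:
  assumes "set Ws \<subseteq> {X, -X}" "length Ws \<ge> 2"
  shows "nested_comm Ws = (0::complex^'n^'n)"
proof -
  obtain Z Z' Zs where W: "Ws = Z # Z' # Zs" using assms(2)
    by (cases Ws; cases "tl Ws") auto
  have "nested_comm (Z' # Zs) \<in> {X, -X, 0}" using assms(1) W nested_pm[of "Z' # Zs" X] by simp
  moreover have "Z \<in> {X, -X}" using assms(1) W by simp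
  ultimately show ?thesis using W mcomm_pm by simp
qed

lemma prodP_pos: "0 < (\<Prod>(a, b)\<leftarrow>ps. fact a * fact b :: real)"
  by (induction ps) auto

lemma dynkin_11: "dynkin_idx (Suc 0) (Suc 0) = {[(1, 0)], [(0, 1)]}"
proof
  show "dynkin_idx (Suc 0) (Suc 0) \<subseteq> {[(1, 0)], [(0, 1)]}"
  proof
    fix ps assume "ps \<in> dynkin_idx (Suc 0) (Suc 0)"
    then obtain a b where "ps = [(a, b)]" "a + b = 1"
      by (auto simp: dynkin_idx_def length_Suc_conv)
    then show "ps \<in> {[(1, 0)], [(0, 1)]}" by (cases a) auto
  qed
  show "{[(1, 0)], [(0, 1)]} \<subseteq> dynkin_idx (Suc 0) (Suc 0)" by (auto simp: dynkin_idx_def)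
qed

lemma BCH_1: "BCH 1 X Y = X + Y"
  by (simp add: BCH_def dynkin_11 bch_word_def)

lemma main_norm:
  fixes X Y :: "complex^'n^'n"
  assumes "r \<ge> 2"
  shows "norm (BCH r X Y) \<le> (2 ^ (2 * r - 1) * real r ^ r / fact r)
              * (max (op_norm X) (op_norm Y)) ^ (r - 1) * norm (X + Y)"
proof -
  define M where "M = max (op_norm X) (op_norm Y)"
  define e where "e = norm (X + Y)"
  define K where "K = 2 ^ (r - 1) * M ^ (r - 1) * e"
  define P :: "(nat \<times> nat) list \<Rightarrow> real" where "P ps = (\<Prod>(a, b)\<leftarrow>ps. fact a * fact b)" for ps
  have M0: "0 \<le> M" unfolding M_def using op_norm_nonneg[of X] by linarith
  have K0: "0 \<le> K" unfolding K_def e_def using M0 by simp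
  have Ppos: "0 < P ps" for ps unfolding P_def by (rule prodP_pos)
  have tm: "norm (nested_comm (bch_word X Y ps)) \<le> real r * K" if ps: "ps \<in> dynkin_idx r n" for n ps
  proof -
    let ?Z = "bch_word X Y ps" and ?W = "bch_word X (-X) ps"
    have len: "length ?Z = r" using ps by (simp add: word_len dynkin_idx_def)
    have lenW: "length ?W = r" using ps by (simp add: word_len dynkin_idx_def)
    have "list_all2 (\<lambda>Z W. op_norm Z \<le> M \<and> op_norm W \<le> M \<and> norm (Z - W) \<le> e) ?Z ?W"
      using word_all2[of X Y ps]
      by (rule list_all2_mono) (auto simp: M_def e_def op_norm_neg add.commute)
    then have "norm (nested_comm ?Z - nested_comm ?W) \<le> real r * 2 ^ (r - 1) * M ^ (r - 1) * e"
      using nested_tele[of M e ?Z ?W] len assms by fastforce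
    moreover have "nested_comm ?W = 0"
      using nested_zero[OF word_set[of X ps]] lenW assms by simp
    ultimately show ?thesis by (simp add: K_def mult_ac)
  qed
  have "norm (BCH r X Y) \<le> (\<Sum>n\<in>{1..r}. \<Sum>ps\<in>dynkin_idx r n.
      norm (((-1) ^ (n - 1) / real n / (real r * P ps)) *\<^sub>R nested_comm (bch_word X Y ps)))"
    unfolding BCH_def P_def
    by (rule order_trans[OF norm_sum sum_mono]) (rule norm_sum)
  also have "\<dots> \<le> (\<Sum>n\<in>{1..r}. \<Sum>ps\<in>dynkin_idx r n. K * (1 / real n * (1 / P ps)))"
  proof (intro sum_mono)
    fix n ps assume n: "n \<in> {1..r}" and ps: "ps \<in> dynkin_idx r n"
    have r0: "0 < real r" using assms by simp
    have n0: "0 < real n" using n by simp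
    have "norm (((-1) ^ (n - 1) / real n / (real r * P ps)) *\<^sub>R nested_comm (bch_word X Y ps))
        = 1 / (real n * (real r * P ps)) * norm (nested_comm (bch_word X Y ps))"
      using Ppos[of ps] n0 r0 by (simp add: abs_mult power_abs)
    also have "\<dots> \<le> 1 / (real n * (real r * P ps)) * (real r * K)"
      using tm[OF ps] Ppos[of ps] n0 r0 by (intro mult_left_mono) auto
    also have "\<dots> = K * (1 / real n * (1 / P ps))"
      using Ppos[of ps] n0 r0 by (simp add: field_simps)
    finally show "norm (((-1) ^ (n - 1) / real n / (real r * P ps)) *\<^sub>R nested_comm (bch_word X Y ps))
        \<le> K * (1 / real n * (1 / P ps))" .
  qed
  also have "\<dots> = K * (\<Sum>n\<in>{1..r}. 1 / real n * (\<Sum>ps\<in>dynkin_idx r n. 1 / P ps))"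
    by (simp add: sum_distrib_left)
  also have "\<dots> \<le> K * (\<Sum>n\<in>{1..r}. 1 / real n * ((2 * real n)^r / fact r))"
    using K0 T_bound unfolding P_def by (intro mult_left_mono sum_mono) auto
  also have "\<dots> \<le> K * (2^r * real r ^ r / fact r)"
    using K0 sum_n_bound assms by (intro mult_left_mono) auto
  also have "\<dots> = (2 ^ (r - 1) * 2 ^ r * real r ^ r / fact r) * M ^ (r - 1) * e"
    by (simp add: K_def)
  also have "2 ^ (r - 1) * 2 ^ r = (2::real) ^ (2 * r - 1)"
    using assms by (simp add: power_add[symmetric])
  finally show ?thesis by (simp add: M_def e_def)
qed


theorem mainTheorem7:
  fixes X Y :: "complex^'n^'n" and r :: nat
  assumes "op_norm X + op_norm Y < ln 2"
    and "r \<ge> 1"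
  shows "frob_norm (BCH r X Y)
           \<le> (2 ^ (2 * r - 1) * real r ^ r / fact r)
              * (max (op_norm X) (op_norm Y)) ^ (r - 1) * frob_norm (X + Y)
       \<and> 2 ^ (2 * r - 1) * real r ^ r / fact r \<le> (4 * exp 1) ^ r"
proof
  show "2 ^ (2 * r - 1) * real r ^ r / fact r \<le> (4 * exp 1) ^ r" by (rule const_bound)
  define D where "D = sqrt (real CARD('n))"
  have D0: "0 < D" unfolding D_def by simp
  have nb: "norm (BCH r X Y) \<le> (2 ^ (2 * r - 1) * real r ^ r / fact r)
              * (max (op_norm X) (op_norm Y)) ^ (r - 1) * norm (X + Y)"
  proof (cases "r = 1")
    case True
    then have "BCH r X Y = X + Y" by (simp only: BCH_1)
    then show ?thesis using True by simp
  next
    case False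
    then show ?thesis using assms(2) main_norm[of r X Y] by simp
  qed
  have "norm (BCH r X Y) / D \<le> (2 ^ (2 * r - 1) * real r ^ r / fact r)
              * (max (op_norm X) (op_norm Y)) ^ (r - 1) * norm (X + Y) / D"
    using nb less_imp_le[OF D0] by (rule divide_right_mono)
  then show "frob_norm (BCH r X Y)
           \<le> (2 ^ (2 * r - 1) * real r ^ r / fact r)
              * (max (op_norm X) (op_norm Y)) ^ (r - 1) * frob_norm (X + Y)"
    unfolding frob_eq D_def[symmetric] by simp
qed

end
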